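(* Let $F:\mathcal{G}_{\Sigma,\Delta,\pi}\to\mathcal{G}_{\Sigma,\Delta,\pi}$ be a causal graph dynamics that is monotonic for the subgraph order and admits a monotonic local rule. Assume that for every renaming $R$ the set $\mathrm{Conj}_F(R)$ is a singleton (unique conjugate assumption). Then there is exactly one functor $\widetilde{F}:\mathbf{G}_{\Sigma,\Delta,\pi}\to\mathbf{G}_{\Sigma,\Delta,\pi}$ satisfying $\mathrm{U}\circ F=\widetilde{F}\circ\mathrm{U}$.
   Context: Fix an uncountably infinite set $\mathcal{V}$, sets $\Sigma,\Delta$, finite $\pi$. Graphs: countable $V(G)\subset\mathcal{V}$, a set $E(G)$ of pairwise disjoint two-element subsets of $V(G)\times\pi$, partial labelings $\sigma(G),\delta(G)$; $\mathcal{G}_{\Sigma,\Delta,\pi}$ the set of graphs, ordered by componentwise inclusion $\subseteq$. Renamings are bijections of $\mathcal{V}$, acting naturally on graphs ($V(R(G))=R(V(G))$, edges $\{u\!:\!i,v\!:\!j\}\mapsto\{R(u)\!:\!i,R(v)\!:\!j\}$, labelings precomposed with $R^{-1}$). $\mathrm{Conj}_F(R)$ is the set of renamings $R'$ with $F\circ R=R'\circ F$. Disks $G^r_c$: vertices at distance $\le r+1$ from $c$, edges with an endpoint at distance $\le r$, vertex labels only at distance $\le r$. A local rule of radius $r$ maps radius-$r$ disks to graphs with renaming covariance, disjointness preservation, bounded output size and pairwise consistency of outputs on a common graph; a CGD is $F(G)=\bigcup_{v\in V(G)} f(G^r_v)$; monotonic means w.r.t. $\subseteq$. Category $\mathbf{G}_{\Sigma,\Delta,\pi}$: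 objects graphs, morphisms $m:G\to H$ given by renamings $|m|$ with $|m|(G)\subseteq H$, composition by composition of renamings, identities with identity renaming. $\mathrm{U}:(\mathcal{G}_{\Sigma,\Delta,\pi},\subseteq)\to\mathbf{G}_{\Sigma,\Delta,\pi}$ is the identity on objects and sends $G\subseteq H$ to the morphism $G\to H$ with identity renaming. *)

theory Defs
  imports Main "HOL-Library.Countable_Set"
begin

text \<open>Vertex names have type 'v (the set V), ports type 'p (the finite set pi),
vertex labels 's (Sigma), edge labels 'd (Delta). A port is a pair (u, i).\<close>

record ('v, 'p, 's, 'd) graph =
  gV :: "'v set"
  gE :: "('v \<times> 'p) set set"
  gsig :: "'v \<Rightarrow> 's option"
  gdel :: "('v \<times> 'p) set \<Rightarrow> 'd option"

definition is_graph :: "('v, 'p, 's, 'd) graph \<Rightarrow> bool" where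
  "is_graph G \<longleftrightarrow>
     countable (gV G) \<and>
     (\<forall>e \<in> gE G. \<exists>a b. a \<noteq> b \<and> e = {a, b} \<and> fst a \<in> gV G \<and> fst b \<in> gV G) \<and>
     (\<forall>e \<in> gE G. \<forall>e' \<in> gE G. e \<noteq> e' \<longrightarrow> e \<inter> e' = {}) \<and>
     dom (gsig G) \<subseteq> gV G \<and> dom (gdel G) \<subseteq> gE G"

definition gsub :: "('v, 'p, 's, 'd) graph \<Rightarrow> ('v, 'p, 's, 'd) graph \<Rightarrow> bool" where
  "gsub G H \<longleftrightarrow> gV G \<subseteq> gV H \<and> gE G \<subseteq> gE H \<and>
                  gsig G \<subseteq>\<^sub>m gsig H \<and> gdel G \<subseteq>\<^sub>m gdel H"

definition rename :: "('v \<Rightarrow> 'v) \<Rightarrow> ('v, 'p, 's, 'd) graph \<Rightarrow> ('v, 'p, 's, 'd) graph" where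
  "rename R G = \<lparr> gV = R ` gV G,
                  gE = (\<lambda>e. (\<lambda>(u, i). (R u, i)) ` e) ` gE G,
                  gsig = gsig G \<circ> inv R,
                  gdel = gdel G \<circ> (\<lambda>e. (\<lambda>(u, i). (inv R u, i)) ` e) \<rparr>"

definition Conj :: "(('v, 'p, 's, 'd) graph \<Rightarrow> ('v, 'p, 's, 'd) graph) \<Rightarrow> ('v \<Rightarrow> 'v)
                    \<Rightarrow> ('v \<Rightarrow> 'v) set" where
  "Conj F R = {R'. bij R' \<and> (\<forall>G. is_graph G \<longrightarrow> F (rename R G) = rename R' (F G))}"

definition adj :: "('v, 'p, 's, 'd) graph \<Rightarrow> 'v \<Rightarrow> 'v \<Rightarrow> bool" where
  "adj G u v \<longleftrightarrow> (\<exists>i j. {(u, i), (v, j)} \<in> gE G)"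

fun within :: "('v, 'p, 's, 'd) graph \<Rightarrow> 'v \<Rightarrow> nat \<Rightarrow> 'v \<Rightarrow> bool" where
  "within G c 0 u \<longleftrightarrow> c \<in> gV G \<and> u = c"
| "within G c (Suc n) u \<longleftrightarrow> within G c n u \<or> (\<exists>w. within G c n w \<and> adj G w u)"

definition disk :: "('v, 'p, 's, 'd) graph \<Rightarrow> nat \<Rightarrow> 'v \<Rightarrow> ('v, 'p, 's, 'd) graph" where
  "disk G r c =
     (let E' = {e \<in> gE G. \<exists>p \<in> e. within G c r (fst p)} in
      \<lparr> gV = {u. within G c (Suc r) u},
        gE = E',
        gsig = gsig G |` {u. within G c r u},
        gdel = gdel G |` E' \<rparr>)"

definition is_disk :: "nat \<Rightarrow> ('v, 'p, 's, 'd) graph \<Rightarrow> bool" where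
  "is_disk r D \<longleftrightarrow> (\<exists>G c. is_graph G \<and> c \<in> gV G \<and> D = disk G r c)"

definition consistent :: "('v, 'p, 's, 'd) graph \<Rightarrow> ('v, 'p, 's, 'd) graph \<Rightarrow> bool" where
  "consistent G H \<longleftrightarrow>
     (\<forall>e \<in> gE G. \<forall>e' \<in> gE H. e = e' \<or> e \<inter> e' = {}) \<and>
     (\<forall>u \<in> dom (gsig G) \<inter> dom (gsig H). gsig G u = gsig H u) \<and>
     (\<forall>e \<in> dom (gdel G) \<inter> dom (gdel H). gdel G e = gdel H e)"

definition gUnion :: "('v, 'p, 's, 'd) graph set \<Rightarrow> ('v, 'p, 's, 'd) graph" where
  "gUnion S = \<lparr> gV = \<Union> (gV ` S), gE = \<Union> (gE ` S),
     gsig = (\<lambda>u. if \<exists>G \<in> S. gsig G u \<noteq> None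
                 then gsig (SOME G. G \<in> S \<and> gsig G u \<noteq> None) u else None),
     gdel = (\<lambda>e. if \<exists>G \<in> S. gdel G e \<noteq> None
                 then gdel (SOME G. G \<in> S \<and> gdel G e \<noteq> None) e else None) \<rparr>"

definition local_rule :: "nat \<Rightarrow> (('v, 'p, 's, 'd) graph \<Rightarrow> ('v, 'p, 's, 'd) graph) \<Rightarrow> bool" where
  "local_rule r f \<longleftrightarrow>
     (\<forall>D. is_disk r D \<longrightarrow> is_graph (f D)) \<and>
     \<comment> \<open>renaming covariance\<close>
     (\<forall>D R. is_disk r D \<and> bij R \<longrightarrow> (\<exists>R'. bij R' \<and> f (rename R D) = rename R' (f D))) \<and>
     \<comment> \<open>disjointness preservation\<close>
     (\<forall>D D'. is_disk r D \<and> is_disk r D' \<and> gV D \<inter> gV D' = {} \<longrightarrow> gV (f D) \<inter> gV (f D') = {}) \<and>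
     \<comment> \<open>bounded output size\<close>
     (\<exists>b::nat. \<forall>D. is_disk r D \<longrightarrow> finite (gV (f D)) \<and> card (gV (f D)) \<le> b) \<and>
     \<comment> \<open>pairwise consistency of outputs on a common graph\<close>
     (\<forall>G u v. is_graph G \<and> u \<in> gV G \<and> v \<in> gV G \<longrightarrow> consistent (f (disk G r u)) (f (disk G r v)))"

definition monotonic_local_rule :: "nat \<Rightarrow> (('v, 'p, 's, 'd) graph \<Rightarrow> ('v, 'p, 's, 'd) graph) \<Rightarrow> bool" where
  "monotonic_local_rule r f \<longleftrightarrow> local_rule r f \<and>
     (\<forall>D D'. is_disk r D \<and> is_disk r D' \<and> gsub D D' \<longrightarrow> gsub (f D) (f D'))"

definition induced_by :: "(('v, 'p, 's, 'd) graph \<Rightarrow> ('v, 'p, 's, 'd) graph) \<Rightarrow> nat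
                         \<Rightarrow> (('v, 'p, 's, 'd) graph \<Rightarrow> ('v, 'p, 's, 'd) graph) \<Rightarrow> bool" where
  "induced_by F r f \<longleftrightarrow> (\<forall>G. is_graph G \<longrightarrow> F G = gUnion ((\<lambda>v. f (disk G r v)) ` gV G))"

definition is_CGD :: "(('v, 'p, 's, 'd) graph \<Rightarrow> ('v, 'p, 's, 'd) graph) \<Rightarrow> bool" where
  "is_CGD F \<longleftrightarrow> (\<exists>r f. local_rule r f \<and> induced_by F r f)"

definition monotonic_F :: "(('v, 'p, 's, 'd) graph \<Rightarrow> ('v, 'p, 's, 'd) graph) \<Rightarrow> bool" where
  "monotonic_F F \<longleftrightarrow> (\<forall>G H. is_graph G \<and> is_graph H \<and> gsub G H \<longrightarrow> gsub (F G) (F H))"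

type_synonym ('v, 'p, 's, 'd) morph =
  "('v, 'p, 's, 'd) graph \<times> ('v, 'p, 's, 'd) graph \<times> ('v \<Rightarrow> 'v)"

definition msrc :: "('v, 'p, 's, 'd) morph \<Rightarrow> ('v, 'p, 's, 'd) graph" where
  "msrc m = fst m"
definition mtgt :: "('v, 'p, 's, 'd) morph \<Rightarrow> ('v, 'p, 's, 'd) graph" where
  "mtgt m = fst (snd m)"
definition mren :: "('v, 'p, 's, 'd) morph \<Rightarrow> ('v \<Rightarrow> 'v)" where
  "mren m = snd (snd m)"

definition is_morph :: "('v, 'p, 's, 'd) morph \<Rightarrow> bool" where
  "is_morph m \<longleftrightarrow> is_graph (msrc m) \<and> is_graph (mtgt m) \<and> bij (mren m) \<and>
                   gsub (rename (mren m) (msrc m)) (mtgt m)"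

definition mid :: "('v, 'p, 's, 'd) graph \<Rightarrow> ('v, 'p, 's, 'd) morph" where
  "mid G = (G, G, id)"

text \<open>mcomp m2 m1 = m2 o m1 (first m1, then m2).\<close>
definition mcomp :: "('v, 'p, 's, 'd) morph \<Rightarrow> ('v, 'p, 's, 'd) morph \<Rightarrow> ('v, 'p, 's, 'd) morph" where
  "mcomp m2 m1 = (msrc m1, mtgt m2, mren m2 \<circ> mren m1)"

text \<open>A functor G -> G, given by an object map and a morphism map
  (only their values on objects / morphisms of G matter).\<close>
definition is_functor ::
  "(('v, 'p, 's, 'd) graph \<Rightarrow> ('v, 'p, 's, 'd) graph) \<Rightarrow>
   (('v, 'p, 's, 'd) morph \<Rightarrow> ('v, 'p, 's, 'd) morph) \<Rightarrow> bool" where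
  "is_functor Fo Fm \<longleftrightarrow>
     (\<forall>G. is_graph G \<longrightarrow> is_graph (Fo G) \<and> Fm (mid G) = mid (Fo G)) \<and>
     (\<forall>m. is_morph m \<longrightarrow> is_morph (Fm m) \<and> msrc (Fm m) = Fo (msrc m) \<and> mtgt (Fm m) = Fo (mtgt m)) \<and>
     (\<forall>m1 m2. is_morph m1 \<and> is_morph m2 \<and> mtgt m1 = msrc m2 \<longrightarrow>
               Fm (mcomp m2 m1) = mcomp (Fm m2) (Fm m1))"

text \<open>U: (graphs, subgraph order) -> G, identity on objects, G <= H to the morphism with identity renaming.\<close>
definition Umor :: "('v, 'p, 's, 'd) graph \<Rightarrow> ('v, 'p, 's, 'd) graph \<Rightarrow> ('v, 'p, 's, 'd) morph" where
  "Umor G H = (G, H, id)"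

text \<open>U o F = Ftilde o U, F viewed as a functor of the poset (monotonic).\<close>
definition lifts :: "(('v, 'p, 's, 'd) graph \<Rightarrow> ('v, 'p, 's, 'd) graph) \<Rightarrow>
   (('v, 'p, 's, 'd) graph \<Rightarrow> ('v, 'p, 's, 'd) graph) \<Rightarrow>
   (('v, 'p, 's, 'd) morph \<Rightarrow> ('v, 'p, 's, 'd) morph) \<Rightarrow> bool" where
  "lifts F Fo Fm \<longleftrightarrow>
     (\<forall>G. is_graph G \<longrightarrow> Fo G = F G) \<and>
     (\<forall>G H. is_graph G \<and> is_graph H \<and> gsub G H \<longrightarrow> Fm (Umor G H) = Umor (F G) (F H))"

end

theory Submission
  imports Defs
begin

lemma rename_id: "rename id G = G"
  by (cases G) (simp add: rename_def case_prod_unfold comp_def)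

lemma rename_comp:
  assumes "bij R1" "bij R2"
  shows "rename (R2 \<circ> R1) G = rename R2 (rename R1 G)"
proof -
  have i: "inv (R2 \<circ> R1) = inv R1 \<circ> inv R2"
    using assms by (rule o_inv_distrib[rotated])
  have e1: "(\<lambda>(u, i). (R2 u, i)) \<circ> (\<lambda>(u, i). (R1 u, i)) = (\<lambda>(u, i). ((R2 \<circ> R1) u, i))"
    by (simp add: fun_eq_iff)
  have e2: "(\<lambda>(u, i). (inv R1 u, i)) \<circ> (\<lambda>(u, i). (inv R2 u, i)) = (\<lambda>(u, i). ((inv R1 \<circ> inv R2) u, i))"
    by (simp add: fun_eq_iff)
  have E: "(\<lambda>e. (\<lambda>(u, i). ((R2 \<circ> R1) u, i)) ` e) ` gE G =
     (\<lambda>e. (\<lambda>(u, i). (R2 u, i)) ` e) ` (\<lambda>e. (\<lambda>(u, i). (R1 u, i)) ` e) ` gE G"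
    unfolding image_comp e1[symmetric] by (simp add: o_def image_comp)
  have D: "(\<lambda>e. (\<lambda>(u, i). ((inv R1 \<circ> inv R2) u, i)) ` e) =
     (\<lambda>e. (\<lambda>(u, i). (inv R1 u, i)) ` e) \<circ> (\<lambda>e. (\<lambda>(u, i). (inv R2 u, i)) ` e)"
    unfolding e2[symmetric] by (simp add: fun_eq_iff image_comp)
  show ?thesis
    unfolding rename_def i graph.simps
    by (simp only: E D image_comp o_assoc)
qed

lemma rename_inv:
  assumes "bij R" shows "rename (inv R) (rename R G) = G"
proof -
  have "rename (inv R) (rename R G) = rename (inv R \<circ> R) G"
    using assms by (simp add: rename_comp bij_imp_bij_inv)
  also have "inv R \<circ> R = id" using assms by (simp add: bij_is_inj)
  finally show ?thesis by (metis rename_id)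
qed

lemma rename_mono:
  assumes "gsub G H" shows "gsub (rename R G) (rename R H)"
  using assms unfolding gsub_def rename_def map_le_def
  by (auto simp: dom_def)

lemma gsub_refl: "gsub G G"
  by (simp add: gsub_def)

lemma gsub_antisym:
  assumes "gsub G H" "gsub H G" shows "G = H"
  using assms unfolding gsub_def
  by (intro graph.equality) (auto intro: map_le_antisym)

lemma rename_graph:
  assumes R: "bij R" and G: "is_graph G"
  shows "is_graph (rename R G)"
proof -
  let ?f = "\<lambda>(u::'a, i::'b). (R u, i)"
  let ?g = "\<lambda>(u::'a, i::'b). (inv R u, i)"
  have iR: "inj R" using R by (simp add: bij_is_inj)
  have gf0: "?g (?f x) = x" for x using R by (cases x) (simp add: bij_is_inj)
  have injf: "inj ?f" by (rule inj_on_inverseI[where g="?g"]) (rule gf0)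
  have GE: "\<forall>e \<in> gE G. \<exists>a b. a \<noteq> b \<and> e = {a, b} \<and> fst a \<in> gV G \<and> fst b \<in> gV G"
    using G by (simp add: is_graph_def)
  have GD: "\<forall>e \<in> gE G. \<forall>e' \<in> gE G. e \<noteq> e' \<longrightarrow> e \<inter> e' = {}"
    using G by (simp add: is_graph_def)
  have fg: "?f (?g x) = x" for x using R by (cases x) (simp add: surj_f_inv_f bij_is_surj)
  have gf: "?g (?f x) = x" for x using R by (cases x) (simp add: bij_is_inj)
  have c1: "countable (gV (rename R G))"
    using G by (simp add: rename_def is_graph_def)
  have c2: "\<forall>e \<in> gE (rename R G). \<exists>a b. a \<noteq> b \<and> e = {a, b} \<and> fst a \<in> gV (rename R G) \<and> fst b \<in> gV (rename R G)"
  proof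
    fix e assume "e \<in> gE (rename R G)"
    then have "e \<in> (\<lambda>e. ?f ` e) ` gE G" by (simp add: rename_def)
    then obtain e0 where e0: "e0 \<in> gE G" "e = ?f ` e0" by (rule imageE)
    from GE e0(1) obtain a b where ab: "a \<noteq> b" "e0 = {a,b}" "fst a \<in> gV G" "fst b \<in> gV G"
      by blast
    have n: "?f a \<noteq> ?f b" using ab(1) injf by (simp add: inj_eq)
    have ee: "e = {?f a, ?f b}" using e0 ab by simp
    have fa: "fst (?f a) \<in> gV (rename R G)" using ab(3) by (cases a) (simp add: rename_def)
    have fb: "fst (?f b) \<in> gV (rename R G)" using ab(4) by (cases b) (simp add: rename_def)
    show "\<exists>a b. a \<noteq> b \<and> e = {a, b} \<and> fst a \<in> gV (rename R G) \<and> fst b \<in> gV (rename R G)"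
      using n ee fa fb by blast
  qed
  have c3: "\<forall>e \<in> gE (rename R G). \<forall>e' \<in> gE (rename R G). e \<noteq> e' \<longrightarrow> e \<inter> e' = {}"
  proof (intro ballI impI)
    fix e e' assume a: "e \<in> gE (rename R G)" "e' \<in> gE (rename R G)" "e \<noteq> e'"
    obtain e0 where e0: "e0 \<in> gE G" "e = ?f ` e0" using a(1) by (auto simp: rename_def)
    obtain e0' where e0': "e0' \<in> gE G" "e' = ?f ` e0'" using a(2) by (auto simp: rename_def)
    have "e0 \<noteq> e0'" using a(3) e0 e0' by blast
    then have "e0 \<inter> e0' = {}" using GD e0 e0' by blast
    then show "e \<inter> e' = {}" using e0 e0' image_Int[OF injf, of e0 e0'] by simp
  qed
  have c4: "dom (gsig (rename R G)) \<subseteq> gV (rename R G)"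
  proof
    fix u assume "u \<in> dom (gsig (rename R G))"
    then have "inv R u \<in> dom (gsig G)" by (auto simp: rename_def)
    then have "inv R u \<in> gV G" using G by (auto simp: is_graph_def)
    moreover have "u = R (inv R u)" using R by (simp add: bij_is_surj surj_f_inv_f)
    ultimately have "u \<in> R ` gV G" by (metis image_eqI)
    then show "u \<in> gV (rename R G)" by (simp add: rename_def)
  qed
  have c5: "dom (gdel (rename R G)) \<subseteq> gE (rename R G)"
  proof
    fix e assume "e \<in> dom (gdel (rename R G))"
    then have "?g ` e \<in> dom (gdel G)" by (auto simp: rename_def case_prod_unfold)
    then have "?g ` e \<in> gE G" using G by (auto simp: is_graph_def)
    moreover have "?f ` (?g ` e) = e" by (simp add: image_image fg)
    ultimately have "e \<in> (\<lambda>e. ?f ` e) ` gE G" by (metis image_eqI)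
    then show "e \<in> gE (rename R G)" by (simp add: rename_def)
  qed
  show ?thesis unfolding is_graph_def using c1 c2 c3 c4 c5 by (intro conjI)
qed

definition Eg :: "('v, 'p, 's, 'd) graph" where
  "Eg = \<lparr>gV = {}, gE = {}, gsig = Map.empty, gdel = Map.empty\<rparr>"

lemma Eg_graph: "is_graph Eg"
  by (simp add: Eg_def is_graph_def)

lemma Eg_rename: "rename R Eg = Eg"
  by (simp add: Eg_def rename_def comp_def)

lemma Eg_sub: "gsub Eg G"
  by (simp add: Eg_def gsub_def)

theorem proposition4p12:
  fixes F :: "('v, 'p::finite, 's, 'd) graph \<Rightarrow> ('v, 'p, 's, 'd) graph"
  assumes "infinite (UNIV :: 'v set)" and "\<not> countable (UNIV :: 'v set)"
    and "\<forall>G. is_graph G \<longrightarrow> is_graph (F G)"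
    and "is_CGD F"
    and "monotonic_F F"
    and "\<exists>r f. monotonic_local_rule r f \<and> induced_by F r f"
    and "\<forall>R. bij R \<longrightarrow> (\<exists>R'. Conj F R = {R'})"
  shows "\<exists>Fo Fm. is_functor Fo Fm \<and> lifts F Fo Fm \<and>
           (\<forall>Fo' Fm'. is_functor Fo' Fm' \<and> lifts F Fo' Fm' \<longrightarrow>
              (\<forall>G. is_graph G \<longrightarrow> Fo' G = Fo G) \<and>
              (\<forall>m. is_morph m \<longrightarrow> Fm' m = Fm m))"
proof -
  note FG = assms(3)
  note mon = assms(5)[unfolded monotonic_F_def]
  define cj where "cj R = (THE R'. R' \<in> Conj F R)" for R
  have cjC: "Conj F R = {cj R}" if "bij R" for R
    using assms(7) that unfolding cj_def by force
  have cjI: "cj R = R'" if "bij R" "R' \<in> Conj F R" for R R'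
    using cjC[OF that(1)] that(2) by auto
  have cjbij: "bij (cj R)" if "bij R" for R
    using cjC[OF that] unfolding Conj_def by auto
  have cjeq: "F (rename R G) = rename (cj R) (F G)" if "bij R" "is_graph G" for R G
    using cjC[OF that(1)] that(2) unfolding Conj_def by auto
  have cjid: "cj id = id"
    by (rule cjI) (auto simp: Conj_def rename_id)
  have cjcomp: "cj (R2 \<circ> R1) = cj R2 \<circ> cj R1" if "bij R1" "bij R2" for R1 R2
  proof (rule cjI)
    show "bij (R2 \<circ> R1)" using that by (simp add: bij_comp)
    show "cj R2 \<circ> cj R1 \<in> Conj F (R2 \<circ> R1)"
      unfolding Conj_def
    proof (intro CollectI conjI allI impI)
      show "bij (cj R2 \<circ> cj R1)" using cjbij that by (simp add: bij_comp)
      fix G :: "('v, 'p, 's, 'd) graph" assume G: "is_graph G"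
      have "F (rename (R2 \<circ> R1) G) = F (rename R2 (rename R1 G))"
        using that by (simp add: rename_comp)
      also have "\<dots> = rename (cj R2) (F (rename R1 G))"
        using that G by (simp add: cjeq rename_graph)
      also have "\<dots> = rename (cj R2) (rename (cj R1) (F G))"
        using that G by (simp add: cjeq)
      also have "\<dots> = rename (cj R2 \<circ> cj R1) (F G)"
        using that cjbij by (simp add: rename_comp)
      finally show "F (rename (R2 \<circ> R1) G) = rename (cj R2 \<circ> cj R1) (F G)" .
    qed
  qed
  define Fm where "Fm m = (F (msrc m), F (mtgt m), cj (mren m))" for m :: "('v, 'p, 's, 'd) morph"
  have func: "is_functor F Fm"
    unfolding is_functor_def
  proof (intro conjI allI impI)
    fix G :: "('v, 'p, 's, 'd) graph" assume "is_graph G"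
    then show "is_graph (F G)" using FG by auto
    show "Fm (mid G) = mid (F G)" by (simp add: Fm_def mid_def msrc_def mtgt_def mren_def cjid)
  next
    fix m :: "('v, 'p, 's, 'd) morph" assume m: "is_morph m"
    show "msrc (Fm m) = F (msrc m)" "mtgt (Fm m) = F (mtgt m)"
      by (simp_all add: Fm_def msrc_def mtgt_def)
    have b: "bij (mren m)" and g1: "is_graph (msrc m)" and g2: "is_graph (mtgt m)"
      and s: "gsub (rename (mren m) (msrc m)) (mtgt m)"
      using m by (auto simp: is_morph_def)
    have "gsub (F (rename (mren m) (msrc m))) (F (mtgt m))"
      using mon g2 s rename_graph[OF b g1] by blast
    then show "is_morph (Fm m)"
      using b g1 g2 FG cjbij[OF b] cjeq[OF b g1]
      by (simp add: is_morph_def Fm_def msrc_def mtgt_def mren_def)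
  next
    fix m1 m2 :: "('v, 'p, 's, 'd) morph"
    assume "is_morph m1 \<and> is_morph m2 \<and> mtgt m1 = msrc m2"
    then have "bij (mren m1)" "bij (mren m2)" by (auto simp: is_morph_def)
    then show "Fm (mcomp m2 m1) = mcomp (Fm m2) (Fm m1)"
      by (simp add: Fm_def mcomp_def msrc_def mtgt_def mren_def cjcomp)
  qed
  have lift: "lifts F F Fm"
    by (simp add: lifts_def Fm_def Umor_def msrc_def mtgt_def mren_def cjid)
  have uniq: "(\<forall>G. is_graph G \<longrightarrow> Fo' G = F G) \<and> (\<forall>m. is_morph m \<longrightarrow> Fm' m = Fm m)"
    if fu: "is_functor Fo' Fm'" and li: "lifts F Fo' Fm'" for Fo' Fm'
  proof -
    have Fo': "Fo' G = F G" if "is_graph G" for G using li that by (simp add: lifts_def)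
    have U: "Fm' (Umor G H) = Umor (F G) (F H)" if "is_graph G" "is_graph H" "gsub G H" for G H
      using li that by (simp add: lifts_def)
    have fm: "is_morph m \<Longrightarrow> is_morph (Fm' m) \<and> msrc (Fm' m) = Fo' (msrc m) \<and> mtgt (Fm' m) = Fo' (mtgt m)" for m
      using fu unfolding is_functor_def by blast
    have fc: "is_morph m1 \<Longrightarrow> is_morph m2 \<Longrightarrow> mtgt m1 = msrc m2 \<Longrightarrow> Fm' (mcomp m2 m1) = mcomp (Fm' m2) (Fm' m1)" for m1 m2
      using fu unfolding is_functor_def by blast
    have fid: "is_graph G \<Longrightarrow> Fm' (mid G) = mid (Fo' G)" for G
      using fu unfolding is_functor_def by blast
    define th where "th R = mren (Fm' (Eg, Eg, R))" for R
    have Umorph: "is_morph (Umor G H)" if "is_graph G" "is_graph H" "gsub G H" for G H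
      using that by (simp add: is_morph_def Umor_def msrc_def mtgt_def mren_def rename_id)
    have Emorph: "is_morph (Eg, Eg, R)" if "bij R" for R
      using that by (simp add: is_morph_def msrc_def mtgt_def mren_def Eg_rename Eg_graph gsub_refl)
    have form: "Fm' m = (F (msrc m), F (mtgt m), th (mren m))" if m: "is_morph m" for m
    proof -
      obtain G H R where mm: "m = (G, H, R)" by (cases m) auto
      have G: "is_graph G" and H: "is_graph H" and R: "bij R" using m mm by (auto simp: is_morph_def msrc_def mtgt_def mren_def)
      have e1: "mcomp m (Umor Eg G) = (Eg, H, R)"
        by (simp add: mm mcomp_def Umor_def msrc_def mtgt_def mren_def)
      have e2: "mcomp (Umor Eg H) (Eg, Eg, R) = (Eg, H, R)"
        by (simp add: mcomp_def Umor_def msrc_def mtgt_def mren_def)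
      have "Fm' (mcomp m (Umor Eg G)) = mcomp (Fm' m) (Fm' (Umor Eg G))"
        by (rule fc) (use m mm G Umorph Eg_graph Eg_sub in \<open>auto simp: Umor_def mtgt_def msrc_def\<close>)
      moreover have "Fm' (mcomp (Umor Eg H) (Eg, Eg, R)) = mcomp (Fm' (Umor Eg H)) (Fm' (Eg, Eg, R))"
        by (rule fc) (use H R Umorph Emorph Eg_graph Eg_sub in \<open>auto simp: Umor_def mtgt_def msrc_def\<close>)
      ultimately have "mcomp (Fm' m) (Fm' (Umor Eg G)) = mcomp (Fm' (Umor Eg H)) (Fm' (Eg, Eg, R))"
        using e1 e2 by simp
      then have "mren (Fm' m) = th R"
        using U[OF Eg_graph G Eg_sub] U[OF Eg_graph H Eg_sub]
        by (simp add: mcomp_def Umor_def mren_def th_def)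
      moreover have "msrc (Fm' m) = F G" "mtgt (Fm' m) = F H"
        using fm[OF m] Fo' G H by (simp_all add: mm msrc_def mtgt_def)
      ultimately show ?thesis
        by (simp add: mm msrc_def mtgt_def mren_def prod_eq_iff)
    qed
    have thC: "th R = cj R" if R: "bij R" for R
    proof (rule sym, rule cjI[OF R])
      have thb: "bij (th R)" using fm[OF Emorph[OF R]] by (simp add: th_def is_morph_def)
      have Ri: "bij (inv R)" using R by (rule bij_imp_bij_inv)
      have thbi: "bij (th (inv R))" using fm[OF Emorph[OF Ri]] by (simp add: th_def is_morph_def)
      show "th R \<in> Conj F R" unfolding Conj_def
      proof (intro CollectI conjI allI impI thb)
        fix G :: "('v, 'p, 's, 'd) graph" assume G: "is_graph G"
        have RG: "is_graph (rename R G)" using rename_graph[OF R G] .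
        have m1: "is_morph (G, rename R G, R)"
          using G RG R by (simp add: is_morph_def msrc_def mtgt_def mren_def gsub_refl)
        have m2: "is_morph (rename R G, G, inv R)"
          using G RG Ri R by (simp add: is_morph_def msrc_def mtgt_def mren_def gsub_refl rename_inv)
        have c: "mcomp (rename R G, G, inv R) (G, rename R G, R) = mid G"
          using R by (simp add: mcomp_def mid_def msrc_def mtgt_def mren_def bij_is_inj)
        have "Fm' (mcomp (rename R G, G, inv R) (G, rename R G, R)) = mcomp (Fm' (rename R G, G, inv R)) (Fm' (G, rename R G, R))"
          by (rule fc[OF m1 m2]) (simp add: msrc_def mtgt_def)
        then have "mid (F G) = mcomp (Fm' (rename R G, G, inv R)) (Fm' (G, rename R G, R))"
          using c fid[OF G] Fo'[OF G] by simp
        then have inv1: "th (inv R) \<circ> th R = id"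
          using form[OF m1] form[OF m2] by (simp add: mid_def mcomp_def mren_def msrc_def mtgt_def)
        have s1: "gsub (rename (th R) (F G)) (F (rename R G))"
          using fm[OF m1] form[OF m1] by (simp add: Fo'[OF G] Fo'[OF RG] is_morph_def msrc_def mtgt_def mren_def)
        have s2: "gsub (rename (th (inv R)) (F (rename R G))) (F G)"
          using fm[OF m2] form[OF m2] by (simp add: Fo'[OF G] Fo'[OF RG] is_morph_def msrc_def mtgt_def mren_def)
        have c2: "mcomp (G, rename R G, R) (rename R G, G, inv R) = mid (rename R G)"
          using R by (simp add: mcomp_def mid_def msrc_def mtgt_def mren_def bij_is_surj surj_iff_all comp_def fun_eq_iff surj_f_inv_f)
        have "Fm' (mcomp (G, rename R G, R) (rename R G, G, inv R)) = mcomp (Fm' (G, rename R G, R)) (Fm' (rename R G, G, inv R))"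
          by (rule fc[OF m2 m1]) (simp add: msrc_def mtgt_def)
        then have "mid (F (rename R G)) = mcomp (Fm' (G, rename R G, R)) (Fm' (rename R G, G, inv R))"
          using c2 fid[OF RG] Fo'[OF RG] by simp
        then have inv2: "th R \<circ> th (inv R) = id"
          using form[OF m1] form[OF m2] by (simp add: mid_def mcomp_def mren_def msrc_def mtgt_def)
        have "gsub (rename (th R) (rename (th (inv R)) (F (rename R G)))) (rename (th R) (F G))"
          by (rule rename_mono[OF s2])
        then have "gsub (F (rename R G)) (rename (th R) (F G))"
          using thb thbi inv2 by (simp add: rename_comp[symmetric] rename_id)
        then show "F (rename R G) = rename (th R) (F G)"
          using s1 by (simp add: gsub_antisym)
      qed
    qed
    show ?thesis
    proof (intro conjI allI impI)
      fix G :: "('v, 'p, 's, 'd) graph" assume "is_graph G" then show "Fo' G = F G" by (rule Fo')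
    next
      fix m :: "('v, 'p, 's, 'd) morph" assume m: "is_morph m"
      then have "bij (mren m)" by (simp add: is_morph_def)
      then show "Fm' m = Fm m" using form[OF m] thC by (simp add: Fm_def)
    qed
  qed
  show ?thesis using func lift uniq by blast
qed

end
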